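(* $W\in C^{1,2,1}([0,T)\times\mathbb{R}_+^2)\cap C(\mathcal{O})$, and $W$ satisfies $-\widehat{\mathcal{L}}W=\widehat u$ on $[0,T)\times\mathbb{R}_+^2$ and $W(T,z,h)=0$, where $$\widehat{\mathcal{L}}W=W_t+\tfrac12\theta^2z^2W_{zz}+(\rho-r+m^0+m^1h^{-\kappa})zW_z+(-\delta h+f(I))W_h-(\rho+m^0+m^1h^{-\kappa})W.$$
   Context: Fix constants $T>0$, $r>0$, $\mu\in\mathbb{R}$, $\sigma>0$, $\rho>0$, $m^0\ge 0$, $m^1\ge 0$, $\kappa>0$, $\delta>0$, $\alpha\in(0,1)$, $I>0$ and a number $f(I)>0$. Write $\mathbb{R}_+=(0,\infty)$, $\mathcal{O}=[0,T]\times\mathbb{R}_+^2$, $\theta=(\mu-r)/\sigma$. Let $B$ be a standard Brownian motion. Let $\widehat u(z,h)=(1-\alpha)(z/\alpha)^{\alpha/(\alpha-1)}h$. For $(t,z,h)\in\mathcal{O}$ and $s\in[t,T]$ let $H^2_s=he^{-\delta(s-t)}+\frac{f(I)}{\delta}(1-e^{-\delta(s-t)})$, $M^{H^2}_s=m^0+m^1(H^2_s)^{-\kappa}$, and let $Z^2$ solve $dZ^2_s=(\rho-r+M^{H^2}_s)Z^2_s\,ds-\theta Z^2_s\,dB_s$, $Z^2_t=z$. Define $W(t,z,h)=\mathbb{E}\big[\int_t^T e^{-\int_t^s(\rho+M^{H^2}_u)du}\,\widehat u(Z^2_s,H^2_s)\,ds\big]$. *)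

theory Defs
  imports "HOL-Probability.Probability"
begin

definition std_brownian_motion :: "'a measure \<Rightarrow> (real \<Rightarrow> 'a \<Rightarrow> real) \<Rightarrow> bool" where
  "std_brownian_motion M B \<longleftrightarrow>
     (\<forall>t\<ge>0. B t \<in> borel_measurable M) \<and>
     (\<forall>\<omega>\<in>space M. B 0 \<omega> = 0) \<and>
     (\<forall>\<omega>\<in>space M. continuous_on {0..} (\<lambda>t. B t \<omega>)) \<and>
     (\<forall>s t. 0 \<le> s \<and> s < t \<longrightarrow>
        distributed M lborel (\<lambda>\<omega>. B t \<omega> - B s \<omega>) (normal_density 0 (sqrt (t - s)))) \<and>
     (\<forall>(n::nat) (ts::nat \<Rightarrow> real). (0 \<le> ts 0 \<and> (\<forall>i<n. ts i < ts (Suc i))) \<longrightarrow>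
        prob_space.indep_vars M (\<lambda>_. borel) (\<lambda>i \<omega>. B (ts (Suc i)) \<omega> - B (ts i) \<omega>) {..<n})"

definition u_hat :: "real \<Rightarrow> real \<Rightarrow> real \<Rightarrow> real" where
  "u_hat \<alpha> z h = (1 - \<alpha>) * (z / \<alpha>) powr (\<alpha> / (\<alpha> - 1)) * h"

text \<open>Deterministic habit process H^2 started at h at time t; fI stands for f(I).\<close>
definition H2 :: "real \<Rightarrow> real \<Rightarrow> real \<Rightarrow> real \<Rightarrow> real \<Rightarrow> real" where
  "H2 \<delta> fI t h s = h * exp (- \<delta> * (s - t)) + fI / \<delta> * (1 - exp (- \<delta> * (s - t)))"

definition MH2 :: "real \<Rightarrow> real \<Rightarrow> real \<Rightarrow> real \<Rightarrow> real \<Rightarrow> real \<Rightarrow> real \<Rightarrow> real \<Rightarrow> real" where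
  "MH2 m0 m1 \<kappa> \<delta> fI t h s = m0 + m1 * (H2 \<delta> fI t h s) powr (- \<kappa>)"

text \<open>Z^2: the (unique strong) solution of the linear SDE
  dZ = (rho - r + M_s) Z ds - theta Z dB, Z_t = z, written in closed form.\<close>
definition Z2 :: "(real \<Rightarrow> 'a \<Rightarrow> real) \<Rightarrow> real \<Rightarrow> real \<Rightarrow> real \<Rightarrow> real \<Rightarrow> real \<Rightarrow> real \<Rightarrow> real
    \<Rightarrow> real \<Rightarrow> real \<Rightarrow> real \<Rightarrow> real \<Rightarrow> real \<Rightarrow> real \<Rightarrow> 'a \<Rightarrow> real" where
  "Z2 B r \<mu> \<sigma> \<rho> m0 m1 \<kappa> \<delta> fI t z h s \<omega> =
     z * exp ((\<rho> - r) * (s - t) + (LINT u:{t..s}|lborel. MH2 m0 m1 \<kappa> \<delta> fI t h u)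
              - ((\<mu> - r) / \<sigma>)\<^sup>2 / 2 * (s - t) - ((\<mu> - r) / \<sigma>) * (B s \<omega> - B t \<omega>))"

definition W_fun :: "'a measure \<Rightarrow> (real \<Rightarrow> 'a \<Rightarrow> real) \<Rightarrow> real \<Rightarrow> real \<Rightarrow> real \<Rightarrow> real \<Rightarrow> real
    \<Rightarrow> real \<Rightarrow> real \<Rightarrow> real \<Rightarrow> real \<Rightarrow> real \<Rightarrow> real \<Rightarrow> real \<Rightarrow> real \<Rightarrow> real \<Rightarrow> real" where
  "W_fun M B T r \<mu> \<sigma> \<rho> m0 m1 \<kappa> \<delta> \<alpha> fI t z h =
     (\<integral>\<omega>. (LINT s:{t..T}|lborel.
         exp (- (LINT u:{t..s}|lborel. \<rho> + MH2 m0 m1 \<kappa> \<delta> fI t h u))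
         * u_hat \<alpha> (Z2 B r \<mu> \<sigma> \<rho> m0 m1 \<kappa> \<delta> fI t z h s \<omega>) (H2 \<delta> fI t h s)) \<partial>M)"

end

theory Submission
  imports Defs
begin


lemma int_scale:
  fixes F :: "real \<Rightarrow> real"
  assumes "continuous_on {0..\<sigma>} F" "\<sigma> \<ge> 0"
  shows "integral {0..\<sigma>} F = \<sigma> * integral {0..1} (\<lambda>u. F (\<sigma>*u))"
proof (cases "\<sigma> = 0")
  case True then show ?thesis by simp
next
  case False
  then have sp: "\<sigma> > 0" using assms by simp
  have "(F has_integral integral {0..\<sigma>} F) {0..\<sigma>}"
    using assms(1) integrable_continuous_real by blast
  from has_integral_stretch_real[OF this, of \<sigma>] sp
  have "((\<lambda>x. F (\<sigma> * x)) has_integral (1 / \<sigma>) *\<^sub>R integral {0..\<sigma>} F) ((\<lambda>x. x / \<sigma>) ` {0..\<sigma>})"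
    by simp
  moreover have "(\<lambda>x. x / \<sigma>) ` {0..\<sigma>} = {0..1}"
  proof
    show "(\<lambda>x. x / \<sigma>) ` {0..\<sigma>} \<subseteq> {0..1}" using sp by auto
    show "{0..1} \<subseteq> (\<lambda>x. x / \<sigma>) ` {0..\<sigma>}"
    proof
      fix x :: real assume "x \<in> {0..1}"
      then have "\<sigma> * x \<in> {0..\<sigma>}" "x = (\<sigma> * x) / \<sigma>" using sp by (auto simp: mult_le_cancel_left1)
      then show "x \<in> (\<lambda>x. x / \<sigma>) ` {0..\<sigma>}" by blast
    qed
  qed
  ultimately have "((\<lambda>x. F (\<sigma> * x)) has_integral (1 / \<sigma>) *\<^sub>R integral {0..\<sigma>} F) {0..1}"
    by simp
  then have "integral {0..1} (\<lambda>u. F (\<sigma>*u)) = (1 / \<sigma>) * integral {0..\<sigma>} F"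
    by (simp add: integral_unique)
  then show ?thesis using sp by simp
qed

lemma param_int_cont:
  fixes F :: "real \<Rightarrow> real \<Rightarrow> real"
  assumes c: "continuous_on ({0..} \<times> U) (\<lambda>(v,h). F v h)"
  shows "continuous_on ({0..} \<times> U) (\<lambda>(\<sigma>,h). integral {0..\<sigma>} (\<lambda>v. F v h))"
proof -
  have c2: "continuous_on (({0..} \<times> U) \<times> cbox 0 1) (\<lambda>(x,u). F (fst x * u) (snd x))"
  proof -
    have "continuous_on (({0..} \<times> U) \<times> cbox 0 (1::real)) (\<lambda>y. (fst (fst y) * snd y, snd (fst y)))"
      by (intro continuous_intros)
    moreover have "(\<lambda>y. (fst (fst y) * snd y, snd (fst y))) ` (({0..} \<times> U) \<times> cbox 0 (1::real)) \<subseteq> {0..} \<times> U"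
      by auto
    ultimately have "continuous_on (({0..} \<times> U) \<times> cbox 0 (1::real)) ((\<lambda>(v,h). F v h) \<circ> (\<lambda>y. (fst (fst y) * snd y, snd (fst y))))"
      by (rule continuous_on_compose[OF _ continuous_on_subset[OF c]])
    then show ?thesis by (simp add: o_def case_prod_beta)
  qed
  have "continuous_on ({0..} \<times> U) (\<lambda>x. integral (cbox 0 1) (\<lambda>u. F (fst x * u) (snd x)))"
    using integral_continuous_on_param[OF c2] by simp
  then have "continuous_on ({0..} \<times> U) (\<lambda>x. fst x * integral {0..1} (\<lambda>u. F (fst x * u) (snd x)))"
    by (intro continuous_intros) auto
  moreover have eq: "fst x * integral {0..1} (\<lambda>u. F (fst x * u) (snd x)) = (\<lambda>(\<sigma>,h). integral {0..\<sigma>} (\<lambda>v. F v h)) x"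
    if x: "x \<in> {0..} \<times> U" for x :: "real \<times> real"
  proof -
    obtain s h where sh: "x = (s,h)" "s \<ge> 0" "h \<in> U" using x by auto
    have "continuous_on {0..s} (\<lambda>v. F v h)"
      by (rule continuous_on_compose2[OF c, of "{0..s}" "\<lambda>v. (v, h)", simplified])
        (use sh in \<open>auto intro!: continuous_intros\<close>)
    from int_scale[OF this sh(2)] show ?thesis unfolding sh by simp
  qed
  ultimately show ?thesis by (rule continuous_on_eq)
qed



lemma cont_swap:
  assumes "continuous_on (A \<times> B) (\<lambda>(x,y). f x y)"
  shows "continuous_on (B \<times> A) (\<lambda>(y,x). f x y)"
proof -
  have "continuous_on (B \<times> A) ((\<lambda>(x,y). f x y) \<circ> (\<lambda>(y,x). (x,y)))"
    by (rule continuous_on_compose[OF _ continuous_on_subset[OF assms]])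
       (auto simp: case_prod_beta intro!: continuous_intros)
  then show ?thesis by (simp add: o_def case_prod_beta)
qed

locale pde =
  fixes \<delta> fI \<kappa> m0 m1 \<beta> c q :: real
  assumes dpos: "\<delta> > 0" and fpos: "fI > 0"
begin

definition phi :: "real \<Rightarrow> real \<Rightarrow> real" where
  "phi s h = h * exp (- \<delta> * s) + fI / \<delta> * (1 - exp (- \<delta> * s))"
definition mm :: "real \<Rightarrow> real" where "mm y = m0 + m1 * y powr (- \<kappa>)"
definition dm :: "real \<Rightarrow> real" where "dm y = m1 * (- \<kappa> * y powr (- \<kappa> - 1))"
definition I :: "real \<Rightarrow> real \<Rightarrow> real" where "I s h = integral {0..s} (\<lambda>v. mm (phi v h))"
definition Ih :: "real \<Rightarrow> real \<Rightarrow> real" where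
  "Ih s h = integral {0..s} (\<lambda>v. dm (phi v h) * exp (- \<delta> * v))"
definition k0 :: "real \<Rightarrow> real \<Rightarrow> real" where
  "k0 s h = c * exp (\<beta> * s - q * I s h) * phi s h"
definition k0h :: "real \<Rightarrow> real \<Rightarrow> real" where
  "k0h s h = c * exp (\<beta> * s - q * I s h) * (exp (- \<delta> * s) - q * Ih s h * phi s h)"
definition g :: "real \<Rightarrow> real \<Rightarrow> real" where "g s h = integral {0..s} (\<lambda>v. k0 v h)"
definition gh :: "real \<Rightarrow> real \<Rightarrow> real" where "gh s h = integral {0..s} (\<lambda>v. k0h v h)"

abbreviation "D \<equiv> {0::real..} \<times> {0::real<..}"

lemma phi_pos: assumes "s \<ge> 0" "h > 0" shows "phi s h > 0"
proof -
  have e: "exp (- \<delta> * s) \<le> 1" using assms dpos by simp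
  have "h * exp (- \<delta> * s) > 0" using assms by simp
  moreover have "fI / \<delta> * (1 - exp (- \<delta> * s)) \<ge> 0" using e dpos fpos by simp
  ultimately show ?thesis unfolding phi_def by linarith
qed

lemma phi0[simp]: "phi 0 h = h" by (simp add: phi_def)

lemma phi_cont: "continuous_on S (\<lambda>x. phi (f x) (k x))" if "continuous_on S f" "continuous_on S k"
  unfolding phi_def using that by (intro continuous_intros)

lemma phi_ne: "\<forall>x\<in>D. phi (fst x) (snd x) \<noteq> 0"
  using phi_pos by (auto simp: less_imp_neq[symmetric])

lemma cont_phiD: "continuous_on D (\<lambda>x. phi (fst x) (snd x))"
  by (intro phi_cont continuous_on_fst continuous_on_snd continuous_on_id)

lemma cont_mphi: "continuous_on D (\<lambda>(v,h). mm (phi v h))"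
  unfolding mm_def case_prod_beta
  by (intro continuous_on_add continuous_on_const continuous_on_mult continuous_on_powr cont_phiD phi_ne)

lemma cont_dmphi: "continuous_on D (\<lambda>(v,h). dm (phi v h) * exp (- \<delta> * v))"
  unfolding dm_def case_prod_beta
  by (intro continuous_on_add continuous_on_const continuous_on_mult continuous_on_powr cont_phiD phi_ne
        continuous_on_exp continuous_on_minus continuous_on_fst continuous_on_id)

lemma contD_h: assumes "continuous_on D (\<lambda>(v,h). F v h)" "h > 0"
  shows "continuous_on {0..s} (\<lambda>v. F v h)"
  by (rule continuous_on_compose2[OF assms(1), of "{0..s}" "\<lambda>v. (v, h)", simplified])
     (use assms(2) in \<open>auto intro!: continuous_intros\<close>)

lemma contD_swap: assumes "continuous_on D (\<lambda>(v,h). F v h)"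
  shows "continuous_on ({0<..} \<times> cbox 0 s) (\<lambda>(x,v). F v x)"
proof -
  have "continuous_on ({0<..} \<times> {0..}) (\<lambda>(x,v). F v x)" using cont_swap[OF assms] .
  then show ?thesis by (rule continuous_on_subset) auto
qed

lemma contD_fs: "continuous_on D (\<lambda>(v,h). F v h) \<Longrightarrow> continuous_on D (\<lambda>x. F (fst x) (snd x))"
  by (simp add: case_prod_beta)

lemma leib:
  assumes ch: "continuous_on D (\<lambda>(v,h). Fh v h)"
    and d: "\<And>v x. v \<ge> 0 \<Longrightarrow> x > 0 \<Longrightarrow> ((\<lambda>x. F v x) has_real_derivative Fh v x) (at x)"
    and c: "continuous_on D (\<lambda>(v,h). F v h)" and s: "s \<ge> 0" and h: "h > 0"
  shows "((\<lambda>x. integral {0..s} (\<lambda>v. F v x)) has_real_derivative integral {0..s} (\<lambda>v. Fh v h)) (at h)"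
proof -
  have "((\<lambda>x. integral (cbox 0 s) (\<lambda>v. F v x)) has_field_derivative integral (cbox 0 s) (\<lambda>v. Fh v h)) (at h within {0<..})"
  proof (rule leibniz_rule_field_derivative)
    show "((\<lambda>x. F t x) has_field_derivative Fh t x) (at x within {0<..})"
      if "x \<in> {0<..}" "t \<in> cbox 0 s" for x t
      using d[of t x] that by (auto intro: has_field_derivative_at_within)
    show "(\<lambda>v. F v x) integrable_on cbox 0 s" if "x \<in> {0<..}" for x
      using contD_h[OF c, of x s] that by (auto intro!: integrable_continuous_real)
    show "continuous_on ({0<..} \<times> cbox 0 s) (\<lambda>(x, t). Fh t x)" using contD_swap[OF ch] .
  qed (use h in auto)
  then show ?thesis using h by (simp add: at_within_open[of h "{0<..}"])
qed

lemma phi_deriv_h: "((\<lambda>x. phi v x) has_real_derivative exp (- \<delta> * v)) (at x)"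
  unfolding phi_def by (auto intro!: derivative_eq_intros)

lemma phi_deriv_s: "((\<lambda>v. phi v h) has_real_derivative (fI - \<delta> * h) * exp (- \<delta> * v)) (at v within S)"
  unfolding phi_def by (auto intro!: derivative_eq_intros simp: field_simps dpos[THEN less_imp_neq, symmetric])

lemma mm_deriv: assumes "y > 0" "(f has_real_derivative f') (at x within S)" "f x = y"
  shows "((\<lambda>x. mm (f x)) has_real_derivative dm y * f') (at x within S)"
proof -
  have "DERIV (\<lambda>z. z powr (-\<kappa>)) (f x) :> (-\<kappa>) * y powr (-\<kappa> - 1)"
    using has_real_derivative_powr[OF assms(1), of "-\<kappa>"] assms(3) by simp
  from DERIV_chain'[OF assms(2) this]
  have "((\<lambda>x. f x powr (-\<kappa>)) has_real_derivative (-\<kappa>) * y powr (-\<kappa> - 1) * f') (at x within S)" .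
  then have "((\<lambda>x. m0 + m1 * f x powr (-\<kappa>)) has_real_derivative 0 + m1 * ((-\<kappa>) * y powr (-\<kappa> - 1) * f')) (at x within S)"
    by (intro DERIV_add DERIV_const DERIV_cmult)
  then show ?thesis unfolding mm_def dm_def by (simp add: mult.assoc)
qed

lemma exp_deriv: "(f has_real_derivative Df) (at x within S) \<Longrightarrow> ((\<lambda>x. exp (f x)) has_real_derivative exp (f x) * Df) (at x within S)"
  by (rule DERIV_chain'[OF _ DERIV_exp])

lemma I_cont: "continuous_on D (\<lambda>(s,h). I s h)"
  unfolding I_def by (rule param_int_cont[OF cont_mphi])

lemma Ih_cont: "continuous_on D (\<lambda>(s,h). Ih s h)"
  unfolding Ih_def by (rule param_int_cont[OF cont_dmphi])

lemma I_deriv_h: assumes "s \<ge> 0" "h > 0" shows "((\<lambda>x. I s x) has_real_derivative Ih s h) (at h)"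
  unfolding I_def Ih_def
proof (rule leib[OF cont_dmphi _ cont_mphi assms])
  fix v x :: real assume "v \<ge> 0" "x > 0"
  then show "((\<lambda>x. mm (phi v x)) has_real_derivative dm (phi v x) * exp (- \<delta> * v)) (at x)"
    by (intro mm_deriv phi_pos phi_deriv_h) auto
qed

lemma I_deriv_s: assumes "0 \<le> s" "s \<le> L" "h > 0"
  shows "((\<lambda>u. I u h) has_real_derivative mm (phi s h)) (at s within {0..L})"
  unfolding I_def has_real_derivative_iff_has_vector_derivative
  by (rule integral_has_vector_derivative[OF contD_h[OF cont_mphi assms(3)]]) (use assms in auto)

lemma k0_cont: "continuous_on D (\<lambda>(s,h). k0 s h)"
  unfolding k0_def case_prod_beta
  by (intro continuous_on_mult continuous_on_const continuous_on_exp continuous_on_diff cont_phiD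
      contD_fs[OF I_cont, simplified] continuous_on_fst continuous_on_id)

lemma k0h_cont: "continuous_on D (\<lambda>(s,h). k0h s h)"
  unfolding k0h_def case_prod_beta
  by (intro continuous_on_mult continuous_on_const continuous_on_exp continuous_on_diff cont_phiD
      contD_fs[OF I_cont, simplified] contD_fs[OF Ih_cont, simplified] continuous_on_fst continuous_on_minus continuous_on_id)

lemma g_cont: "continuous_on D (\<lambda>(s,h). g s h)"
  unfolding g_def by (rule param_int_cont[OF k0_cont])

lemma gh_cont: "continuous_on D (\<lambda>(s,h). gh s h)"
  unfolding gh_def by (rule param_int_cont[OF k0h_cont])

lemma k0_deriv_h: assumes "s \<ge> 0" "h > 0" shows "((\<lambda>x. k0 s x) has_real_derivative k0h s h) (at h)"
proof -
  have "((\<lambda>x. c * exp (\<beta> * s - q * I s x) * phi s x) has_real_derivative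
     c * (exp (\<beta> * s - q * I s h) * (0 - q * Ih s h)) * phi s h + exp (- \<delta> * s) * (c * exp (\<beta> * s - q * I s h))) (at h)"
    by (intro DERIV_mult DERIV_cmult exp_deriv DERIV_diff DERIV_const I_deriv_h assms phi_deriv_h)
  then show ?thesis unfolding k0_def k0h_def by (simp add: algebra_simps)
qed

lemma k0_deriv_s: assumes "0 \<le> s" "s \<le> L" "h > 0"
  shows "((\<lambda>u. k0 u h) has_real_derivative
    c * exp (\<beta> * s - q * I s h) * ((\<beta> - q * mm (phi s h)) * phi s h + (fI - \<delta> * h) * exp (- \<delta> * s))) (at s within {0..L})"
proof -
  have "((\<lambda>u. c * exp (\<beta> * u - q * I u h) * phi u h) has_real_derivative
     c * (exp (\<beta> * s - q * I s h) * (\<beta> * 1 - q * mm (phi s h))) * phi s h + ((fI - \<delta> * h) * exp (- \<delta> * s)) * (c * exp (\<beta> * s - q * I s h))) (at s within {0..L})"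
    by (intro DERIV_mult DERIV_cmult exp_deriv DERIV_diff DERIV_ident I_deriv_s assms phi_deriv_s)
  then show ?thesis unfolding k0_def by (simp add: algebra_simps)
qed

lemma g_deriv_h: assumes "s \<ge> 0" "h > 0" shows "((\<lambda>x. g s x) has_real_derivative gh s h) (at h)"
  unfolding g_def gh_def by (rule leib[OF k0h_cont _ k0_cont assms]) (rule k0_deriv_h, auto)

lemma g_deriv_s: assumes "0 \<le> s" "s \<le> L" "h > 0"
  shows "((\<lambda>u. g u h) has_real_derivative k0 s h) (at s within {0..L})"
  unfolding g_def has_real_derivative_iff_has_vector_derivative
  by (rule integral_has_vector_derivative[OF contD_h[OF k0_cont assms(3)]]) (use assms in auto)

lemma Ih_ident: assumes s: "s \<ge> 0" and h: "h > 0" shows "(fI - \<delta> * h) * Ih s h = mm (phi s h) - mm h"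
proof -
  have "((\<lambda>v. dm (phi v h) * ((fI - \<delta> * h) * exp (- \<delta> * v))) has_integral (mm (phi s h) - mm (phi 0 h))) {0..s}"
  proof (rule fundamental_theorem_of_calculus[OF s])
    fix x assume "x \<in> {0..s}"
    then show "((\<lambda>v. mm (phi v h)) has_vector_derivative dm (phi x h) * ((fI - \<delta> * h) * exp (- \<delta> * x))) (at x within {0..s})"
      unfolding has_real_derivative_iff_has_vector_derivative[symmetric]
      by (intro mm_deriv phi_pos phi_deriv_s) (use h in auto)
  qed
  then have A: "((\<lambda>v. (fI - \<delta> * h) * (dm (phi v h) * exp (- \<delta> * v))) has_integral (mm (phi s h) - mm h)) {0..s}"
    by (simp add: algebra_simps)
  have "((\<lambda>v. dm (phi v h) * exp (- \<delta> * v)) has_integral Ih s h) {0..s}"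
    unfolding Ih_def using contD_h[OF cont_dmphi h] by (intro integrable_integral integrable_continuous_real)
  from has_integral_mult_right[OF this, of "fI - \<delta> * h"]
  have B: "((\<lambda>v. (fI - \<delta> * h) * (dm (phi v h) * exp (- \<delta> * v))) has_integral (fI - \<delta> * h) * Ih s h) {0..s}" .
  from has_integral_unique[OF B A] show ?thesis .
qed

lemma k0_zero[simp]: "k0 0 h = c * h"
  by (simp add: k0_def I_def)

lemma pde_ident: assumes t: "\<tau> \<ge> 0" and h: "h > 0"
  shows "k0 \<tau> h = (fI - \<delta> * h) * gh \<tau> h + (\<beta> - q * mm h) * g \<tau> h + c * h"
proof -
  define K' where "K' \<sigma> = c * exp (\<beta> * \<sigma> - q * I \<sigma> h) * ((\<beta> - q * mm (phi \<sigma> h)) * phi \<sigma> h + (fI - \<delta> * h) * exp (- \<delta> * \<sigma>))" for \<sigma>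
  have A: "(K' has_integral (k0 \<tau> h - k0 0 h)) {0..\<tau>}"
  proof (rule fundamental_theorem_of_calculus[OF t])
    fix x assume "x \<in> {0..\<tau>}"
    then show "((\<lambda>u. k0 u h) has_vector_derivative K' x) (at x within {0..\<tau>})"
      unfolding has_real_derivative_iff_has_vector_derivative[symmetric] K'_def
      by (intro k0_deriv_s) (use h in auto)
  qed
  have B: "((\<lambda>\<sigma>. k0 \<sigma> h) has_integral g \<tau> h) {0..\<tau>}"
    unfolding g_def using contD_h[OF k0_cont h] by (intro integrable_integral integrable_continuous_real)
  have C: "((\<lambda>\<sigma>. k0h \<sigma> h) has_integral gh \<tau> h) {0..\<tau>}"
    unfolding gh_def using contD_h[OF k0h_cont h] by (intro integrable_integral integrable_continuous_real)
  have D1: "((\<lambda>\<sigma>. K' \<sigma> - \<beta> * k0 \<sigma> h + q * mm h * k0 \<sigma> h) has_integral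
      (k0 \<tau> h - k0 0 h - \<beta> * g \<tau> h + q * mm h * g \<tau> h)) {0..\<tau>}"
    by (intro has_integral_add has_integral_diff A has_integral_mult_right B)
  have pw: "K' \<sigma> - \<beta> * k0 \<sigma> h + q * mm h * k0 \<sigma> h = (fI - \<delta> * h) * k0h \<sigma> h"
    if "\<sigma> \<in> {0..\<tau>}" for \<sigma>
  proof -
    have e: "(fI - \<delta> * h) * Ih \<sigma> h = mm (phi \<sigma> h) - mm h" using Ih_ident[of \<sigma> h] that h by auto
    have "(fI - \<delta> * h) * k0h \<sigma> h = c * exp (\<beta> * \<sigma> - q * I \<sigma> h) * ((fI - \<delta> * h) * exp (- \<delta> * \<sigma>) - q * ((fI - \<delta> * h) * Ih \<sigma> h) * phi \<sigma> h)"
      unfolding k0h_def by (simp add: algebra_simps)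
    also have "\<dots> = K' \<sigma> - \<beta> * k0 \<sigma> h + q * mm h * k0 \<sigma> h"
      unfolding e K'_def k0_def by (simp add: algebra_simps)
    finally show ?thesis by simp
  qed
  have D2: "((\<lambda>\<sigma>. (fI - \<delta> * h) * k0h \<sigma> h) has_integral
      (k0 \<tau> h - k0 0 h - \<beta> * g \<tau> h + q * mm h * g \<tau> h)) {0..\<tau>}"
    using D1 by (subst has_integral_cong[of "{0..\<tau>}" _ "\<lambda>\<sigma>. K' \<sigma> - \<beta> * k0 \<sigma> h + q * mm h * k0 \<sigma> h"]) (auto simp: pw)
  from has_integral_unique[OF has_integral_mult_right[OF C] D2]
  show ?thesis by (simp add: algebra_simps)
qed

lemma lint_shift: fixes F :: "real \<Rightarrow> real \<Rightarrow> real" assumes c: "continuous_on D (\<lambda>(v,h). F v h)" and h: "h > 0" and ts: "t \<le> s"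
  shows "(LINT u:{t..s}|lborel. F (u - t) h) = integral {0..s-t} (\<lambda>v. F v h)"
proof -
  have c1: "continuous_on {0..s-t} (\<lambda>v. F v h)" by (rule contD_h[OF c h])
  have c2: "continuous_on {t..s} (\<lambda>u. F (u - t) h)"
    by (rule continuous_on_compose2[OF c1]) (auto intro!: continuous_intros)
  have "(LINT u:{t..s}|lborel. F (u - t) h) = integral {t..s} (\<lambda>u. F (u-t) h)"
    by (rule set_borel_integral_eq_integral(2)[OF borel_integrable_atLeastAtMost'[OF c2]])
  also have "\<dots> = integral {0..s-t} (\<lambda>v. F v h)"
    using integral_shift_Icc_real[of 0 "s-t" "\<lambda>u. F (u - t) h" t] by (simp add: o_def)
  finally show ?thesis .
qed

end


lemma bm_joint:
  fixes B :: "real \<Rightarrow> 'a \<Rightarrow> real" and M :: "'a measure"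
  assumes meas: "\<forall>t\<ge>0. B t \<in> borel_measurable M"
    and cont: "\<forall>\<omega>\<in>space M. continuous_on {0..} (\<lambda>t. B t \<omega>)"
  shows "(\<lambda>x. B (max 0 (fst x)) (snd x)) \<in> borel_measurable (lborel \<Otimes>\<^sub>M M)"
proof -
  define u where "u n x = B (max 0 (real_of_int \<lfloor>real (Suc n) * max 0 (fst x)\<rfloor> / real (Suc n))) (snd x)"
    for n and x :: "real \<times> 'a"
  show ?thesis
  proof (rule borel_measurable_LIMSEQ_real[where u=u])
  show "u n \<in> borel_measurable (lborel \<Otimes>\<^sub>M M)" for n
  proof -
    have "(\<lambda>x. (\<lambda>i x. B (max 0 (real_of_int i / real (Suc n))) (snd x)) (\<lfloor>real (Suc n) * max 0 (fst x)\<rfloor>) x)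
        \<in> borel_measurable (lborel \<Otimes>\<^sub>M M)"
    proof (rule measurable_compose_countable'[where I=UNIV and f="\<lambda>i x. B (max 0 (real_of_int i / real (Suc n))) (snd x)"
          and g="\<lambda>x. \<lfloor>real (Suc n) * max 0 (fst x)\<rfloor>"])
      fix i :: int
      show "(\<lambda>x. B (max 0 (real_of_int i / real (Suc n))) (snd x)) \<in> borel_measurable (lborel \<Otimes>\<^sub>M M)"
        by (rule measurable_compose[OF measurable_snd]) (use meas in auto)
    next
      show "(\<lambda>x. \<lfloor>real (Suc n) * max 0 (fst x)\<rfloor>) \<in> measurable (lborel \<Otimes>\<^sub>M M) (count_space UNIV)"
        by measurable
    qed auto
    then show ?thesis unfolding u_def by simp
  qed
  fix x :: "real \<times> 'a" assume x: "x \<in> space (lborel \<Otimes>\<^sub>M M)"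
  then have \<omega>: "snd x \<in> space M" by (auto simp: space_pair_measure)
  define s where "s = max 0 (fst x)"
  have s0: "s \<ge> 0" by (simp add: s_def)
  define r where "r n = max 0 (real_of_int \<lfloor>real (Suc n) * s\<rfloor> / real (Suc n))" for n
  have lo: "s - inverse (real (Suc n)) \<le> r n" for n
  proof -
    have "real (Suc n) * s - 1 \<le> real_of_int \<lfloor>real (Suc n) * s\<rfloor>" by linarith
    then have "(real (Suc n) * s - 1) / real (Suc n) \<le> real_of_int \<lfloor>real (Suc n) * s\<rfloor> / real (Suc n)"
      by (intro divide_right_mono) auto
    moreover have "(real (Suc n) * s - 1) / real (Suc n) = s - inverse (real (Suc n))"
      by (simp add: field_simps)
    ultimately have "s - inverse (real (Suc n)) \<le> real_of_int \<lfloor>real (Suc n) * s\<rfloor> / real (Suc n)"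
      by simp
    then show ?thesis unfolding r_def by (simp add: le_max_iff_disj)
  qed
  have hi: "r n \<le> s" for n
  proof -
    have "real_of_int \<lfloor>real (Suc n) * s\<rfloor> \<le> real (Suc n) * s" by linarith
    then have "real_of_int \<lfloor>real (Suc n) * s\<rfloor> / real (Suc n) \<le> s"
      by (simp add: divide_le_eq mult.commute)
    then show ?thesis unfolding r_def using s0 by simp
  qed
  have "(\<lambda>n. s - inverse (real (Suc n))) \<longlonglongrightarrow> s - 0"
    by (intro tendsto_diff tendsto_const LIMSEQ_inverse_real_of_nat)
  then have l1: "(\<lambda>n. s - inverse (real (Suc n))) \<longlonglongrightarrow> s" by simp
  have rl: "r \<longlonglongrightarrow> s"
    by (rule tendsto_sandwich[OF always_eventually always_eventually l1 tendsto_const]) (use lo hi in auto)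
  have "(\<lambda>n. B (r n) (snd x)) \<longlonglongrightarrow> B s (snd x)"
    using continuous_on_tendsto_compose[OF cont[rule_format, OF \<omega>] rl] s0 by (auto simp: r_def o_def)
  then show "(\<lambda>n. u n x) \<longlonglongrightarrow> B (max 0 (fst x)) (snd x)"
    unfolding u_def r_def s_def by simp
qed
qed

lemma normal_exp_eq:
  assumes "\<sigma> > 0"
  shows "normal_density 0 \<sigma> x * exp (l * x) = exp (l\<^sup>2 * \<sigma>\<^sup>2 / 2) * normal_density (l * \<sigma>\<^sup>2) \<sigma> x"
proof -
  have "- (x - 0)\<^sup>2 / (2 * \<sigma>\<^sup>2) + l * x = l\<^sup>2 * \<sigma>\<^sup>2 / 2 + - (x - l * \<sigma>\<^sup>2)\<^sup>2 / (2 * \<sigma>\<^sup>2)"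
    using assms by (simp add: field_simps power2_eq_square)
  then have "exp (- (x - 0)\<^sup>2 / (2 * \<sigma>\<^sup>2)) * exp (l * x) = exp (l\<^sup>2 * \<sigma>\<^sup>2 / 2) * exp (- (x - l * \<sigma>\<^sup>2)\<^sup>2 / (2 * \<sigma>\<^sup>2))"
    by (simp add: exp_add[symmetric])
  then show ?thesis unfolding normal_density_def by (simp add: ac_simps)
qed

lemma bm_mgf:
  fixes B :: "real \<Rightarrow> 'a \<Rightarrow> real" and M :: "'a measure"
  assumes P: "prob_space M" and BM: "std_brownian_motion M B" and t: "0 \<le> t" "t \<le> s"
  shows "integrable M (\<lambda>\<omega>. exp (l * (B s \<omega> - B t \<omega>)))"
    and "(\<integral>\<omega>. exp (l * (B s \<omega> - B t \<omega>)) \<partial>M) = exp (l\<^sup>2 * (s - t) / 2)"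
proof -
  interpret prob_space M by (rule P)
  have "integrable M (\<lambda>\<omega>. exp (l * (B s \<omega> - B t \<omega>))) \<and> (\<integral>\<omega>. exp (l * (B s \<omega> - B t \<omega>)) \<partial>M) = exp (l\<^sup>2 * (s - t) / 2)"
  proof (cases "t = s")
    case True
    then show ?thesis by (simp add: prob_space)
  next
    case False
    then have ts: "t < s" using t by simp
    define \<sigma> where "\<sigma> = sqrt (s - t)"
    have sp: "\<sigma> > 0" and s2: "\<sigma>\<^sup>2 = s - t" using ts by (auto simp: \<sigma>_def)
    have D: "distributed M lborel (\<lambda>\<omega>. B s \<omega> - B t \<omega>) (normal_density 0 \<sigma>)"
      using BM ts t unfolding std_brownian_motion_def \<sigma>_def by auto
    have eqf: "(\<lambda>x. normal_density 0 \<sigma> x * exp (l * x)) = (\<lambda>x. exp (l\<^sup>2 * \<sigma>\<^sup>2 / 2) * normal_density (l * \<sigma>\<^sup>2) \<sigma> x)"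
      using normal_exp_eq[OF sp] by auto
    have "integrable lborel (\<lambda>x. normal_density 0 \<sigma> x * exp (l * x))"
      unfolding eqf by (rule integrable_mult_right, rule integrable_normal_density, rule sp)
    then have I: "integrable M (\<lambda>\<omega>. exp (l * (B s \<omega> - B t \<omega>)))"
      using distributed_integrable[OF D, of "\<lambda>x. exp (l * x)"] by simp
    have "(\<integral>x. normal_density 0 \<sigma> x * exp (l * x) \<partial>lborel) = (\<integral>\<omega>. exp (l * (B s \<omega> - B t \<omega>)) \<partial>M)"
      using distributed_integral[OF D, of "\<lambda>x. exp (l * x)"] by simp
    moreover have "(\<integral>x. normal_density 0 \<sigma> x * exp (l * x) \<partial>lborel) = exp (l\<^sup>2 * (s - t) / 2)"
      unfolding eqf s2 using sp by simp
    ultimately show ?thesis using I by simp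
  qed
  then show "integrable M (\<lambda>\<omega>. exp (l * (B s \<omega> - B t \<omega>)))"
    and "(\<integral>\<omega>. exp (l * (B s \<omega> - B t \<omega>)) \<partial>M) = exp (l\<^sup>2 * (s - t) / 2)" by auto
qed

lemma fubini_exp:
  fixes B :: "real \<Rightarrow> 'a \<Rightarrow> real" and M :: "'a measure" and Dd :: "real \<Rightarrow> real"
  assumes P: "prob_space M" and BM: "std_brownian_motion M B" and t: "0 \<le> t" "t \<le> T"
    and Dc: "continuous_on {t..T} Dd"
  shows "(\<integral>\<omega>. (LINT s:{t..T}|lborel. Dd s * exp (l * (B s \<omega> - B t \<omega>))) \<partial>M)
       = (LINT s:{t..T}|lborel. Dd s * exp (l\<^sup>2 * (s - t) / 2))"
proof -
  interpret prob_space M by (rule P)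
  interpret PS: pair_sigma_finite lborel M by unfold_locales
  define F where "F s \<omega> = (indicator {t..T} s * Dd s) * exp (l * (B (max 0 s) \<omega> - B t \<omega>))" for s \<omega>
  have [measurable]: "(\<lambda>s. indicator {t..T} s * Dd s) \<in> borel_measurable borel"
    using borel_measurable_continuous_on_indicator[OF _ Dc] by simp
  have [measurable]: "(\<lambda>x. B (max 0 (fst x)) (snd x)) \<in> borel_measurable (lborel \<Otimes>\<^sub>M M)"
    by (rule bm_joint) (use BM in \<open>auto simp: std_brownian_motion_def\<close>)
  have [measurable]: "B t \<in> borel_measurable M"
    using BM t by (auto simp: std_brownian_motion_def)
  have meas: "(\<lambda>x. F (fst x) (snd x)) \<in> borel_measurable (lborel \<Otimes>\<^sub>M M)"
    unfolding F_def by measurable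
  have Fs: "integrable M (F s) \<and> (\<integral>\<omega>. F s \<omega> \<partial>M) = indicator {t..T} s * Dd s * exp (l\<^sup>2 * (s - t) / 2)
       \<and> (\<integral>\<omega>. norm (F s \<omega>) \<partial>M) = indicator {t..T} s * \<bar>Dd s\<bar> * exp (l\<^sup>2 * (s - t) / 2)" for s
  proof (cases "s \<in> {t..T}")
    case True
    then have ms: "max 0 s = s" using t by auto
    have e1: "F s = (\<lambda>\<omega>. Dd s * exp (l * (B s \<omega> - B t \<omega>)))"
      using True by (auto simp: F_def ms fun_eq_iff)
    have e2: "(\<lambda>\<omega>. norm (F s \<omega>)) = (\<lambda>\<omega>. \<bar>Dd s\<bar> * exp (l * (B s \<omega> - B t \<omega>)))"
      using True by (auto simp: F_def ms fun_eq_iff abs_mult)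
    have st: "t \<le> s" using True by auto
    show ?thesis unfolding e2 unfolding e1 using True bm_mgf[OF P BM t(1) st, of l] by simp
  next
    case False
    then have "F s = (\<lambda>\<omega>. 0)" by (auto simp: F_def fun_eq_iff)
    then show ?thesis using False by simp
  qed
  have intF: "integrable (lborel \<Otimes>\<^sub>M M) (\<lambda>x. F (fst x) (snd x))"
  proof (rule PS.Fubini_integrable[OF meas])
    have "integrable lborel (\<lambda>s. indicator {t..T} s *\<^sub>R (\<bar>Dd s\<bar> * exp (l\<^sup>2 * (s - t) / 2)))"
    proof -
      have "continuous_on {t..T} (\<lambda>s. \<bar>Dd s\<bar> * exp (l\<^sup>2 * (s - t) / 2))"
        using Dc by (intro continuous_intros) auto
      from borel_integrable_atLeastAtMost'[OF this] show ?thesis unfolding set_integrable_def .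
    qed
    then show "integrable lborel (\<lambda>x. \<integral>y. norm (F (fst (x, y)) (snd (x, y))) \<partial>M)"
      using Fs by (simp add: mult.assoc)
    show "AE x in lborel. integrable M (\<lambda>y. F (fst (x, y)) (snd (x, y)))"
      using Fs by simp
  qed
  have "(\<integral>\<omega>. (LINT s:{t..T}|lborel. Dd s * exp (l * (B s \<omega> - B t \<omega>))) \<partial>M)
      = (\<integral>\<omega>. (\<integral>s. F s \<omega> \<partial>lborel) \<partial>M)"
    unfolding set_lebesgue_integral_def
    using t by (intro Bochner_Integration.integral_cong refl) (auto simp: F_def indicator_def max_def)
  also have "\<dots> = (\<integral>s. (\<integral>\<omega>. F s \<omega> \<partial>M) \<partial>lborel)"
  proof (rule PS.Fubini_integral)
    have "(\<lambda>x. F (fst x) (snd x)) = case_prod F" by (auto simp: fun_eq_iff)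
    then show "integrable (lborel \<Otimes>\<^sub>M M) (case_prod F)" using intF by simp
  qed
  also have "\<dots> = (LINT s:{t..T}|lborel. Dd s * exp (l\<^sup>2 * (s - t) / 2))"
    unfolding set_lebesgue_integral_def using Fs by (simp add: mult.assoc)
  finally show ?thesis .
qed



lemma set_int_cong: "(\<And>x. x \<in> A \<Longrightarrow> f x = g x) \<Longrightarrow> (LINT x:A|M. f x) = (LINT x:A|M. g x)"
  unfolding set_lebesgue_integral_def
  by (intro Bochner_Integration.integral_cong) (auto simp: indicator_def)

lemma W_closed:
  fixes M :: "'a measure" and B :: "real \<Rightarrow> 'a \<Rightarrow> real"
    and T r \<mu> \<sigma> \<rho> m0 m1 \<kappa> \<delta> \<alpha> fI :: real
  assumes P: "prob_space M" and BM: "std_brownian_motion M B"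
    and "T > 0" and "r > 0" and "\<sigma> > 0" and "\<rho> > 0" and "m0 \<ge> 0" and "m1 \<ge> 0"
    and "\<kappa> > 0" and dp: "\<delta> > 0" and a0: "0 < \<alpha>" and a1: "\<alpha> < 1" and fp: "fI > 0"
    and t: "0 \<le> t" "t \<le> T" and z: "z > 0" and h: "h > 0"
  defines "p \<equiv> \<alpha> / (\<alpha> - 1)" and "\<theta> \<equiv> (\<mu> - r) / \<sigma>"
  defines "q \<equiv> 1 - p" and "\<beta> \<equiv> - \<rho> + p * (\<rho> - r) + \<theta>\<^sup>2 * p * (p - 1) / 2" and "c \<equiv> (1 - \<alpha>) / \<alpha> powr p"
  shows "W_fun M B T r \<mu> \<sigma> \<rho> m0 m1 \<kappa> \<delta> \<alpha> fI t z h = z powr p * pde.g \<delta> fI \<kappa> m0 m1 \<beta> c q (T - t) h"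
proof -
  interpret pde \<delta> fI \<kappa> m0 m1 \<beta> c q by unfold_locales (use dp fp in auto)
  define l where "l = - p * \<theta>"
  define \<beta>' where "\<beta>' = \<beta> - l\<^sup>2 / 2"
  define Dd where "Dd s = z powr p * c * exp (\<beta>' * (s - t) - q * I (s - t) h) * phi (s - t) h" for s
  have MH2eq: "MH2 m0 m1 \<kappa> \<delta> fI t h u = mm (phi (u - t) h)" for u
    by (simp add: MH2_def H2_def mm_def phi_def)
  have H2eq: "H2 \<delta> fI t h s = phi (s - t) h" for s
    by (simp add: H2_def phi_def)
  have Lint1: "(LINT u:{t..s}|lborel. MH2 m0 m1 \<kappa> \<delta> fI t h u) = I (s - t) h" if "t \<le> s" for s
    unfolding MH2eq I_def using lint_shift[OF cont_mphi h that] by simp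
  have cont2: "continuous_on D (\<lambda>(v,h). \<rho> + mm (phi v h))"
    using cont_mphi by (auto simp: case_prod_beta intro!: continuous_intros)
  have Lint2: "(LINT u:{t..s}|lborel. \<rho> + MH2 m0 m1 \<kappa> \<delta> fI t h u) = \<rho> * (s - t) + I (s - t) h" if "t \<le> s" for s
  proof -
    have "(LINT u:{t..s}|lborel. \<rho> + MH2 m0 m1 \<kappa> \<delta> fI t h u) = integral {0..s-t} (\<lambda>v. \<rho> + mm (phi v h))"
      unfolding MH2eq using lint_shift[OF cont2 h that] by simp
    also have "\<dots> = integral {0..s-t} (\<lambda>v. \<rho>) + integral {0..s-t} (\<lambda>v. mm (phi v h))"
      by (rule integral_add) (auto intro!: integrable_continuous_real contD_h[OF cont_mphi h])
    also have "\<dots> = \<rho> * (s - t) + I (s - t) h"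
      using that by (simp add: I_def)
    finally show ?thesis .
  qed
  have pw: "exp (- (LINT u:{t..s}|lborel. \<rho> + MH2 m0 m1 \<kappa> \<delta> fI t h u))
         * u_hat \<alpha> (Z2 B r \<mu> \<sigma> \<rho> m0 m1 \<kappa> \<delta> fI t z h s \<omega>) (H2 \<delta> fI t h s)
       = Dd s * exp (l * (B s \<omega> - B t \<omega>))" if "s \<in> {t..T}" for s \<omega>
  proof -
    have ts: "t \<le> s" using that by auto
    define X where "X = (\<rho> - r) * (s - t) + I (s - t) h - \<theta>\<^sup>2 / 2 * (s - t) - \<theta> * (B s \<omega> - B t \<omega>)"
    have Z: "Z2 B r \<mu> \<sigma> \<rho> m0 m1 \<kappa> \<delta> fI t z h s \<omega> = z * exp X"
      unfolding Z2_def Lint1[OF ts] X_def \<theta>_def by simp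
    have U: "u_hat \<alpha> (z * exp X) H = c * z powr p * exp (X * p) * H" for H
      unfolding u_hat_def c_def p_def[symmetric]
      using z a0 by (simp add: powr_divide powr_mult exp_powr_real)
    have E: "exp (- (\<rho> * (s - t) + I (s - t) h)) * exp (X * p) = exp (\<beta>' * (s - t) - q * I (s - t) h) * exp (l * (B s \<omega> - B t \<omega>))"
    proof -
      have "- (\<rho> * (s - t) + I (s - t) h) + X * p = \<beta>' * (s - t) - q * I (s - t) h + l * (B s \<omega> - B t \<omega>)"
        unfolding X_def \<beta>'_def l_def \<beta>_def q_def by (simp add: field_simps power2_eq_square)
      then show ?thesis by (simp add: exp_add[symmetric])
    qed
    show ?thesis
      unfolding Lint2[OF ts] Z U H2eq Dd_def
      using E by (simp add: algebra_simps)
  qed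
  have cI: "continuous_on {t..T} (\<lambda>s. I (s - t) h)"
    by (rule continuous_on_compose2[OF contD_h[OF I_cont h, of "T - t"]]) (auto intro!: continuous_intros)
  have Dc: "continuous_on {t..T} Dd"
    unfolding Dd_def by (intro continuous_intros phi_cont cI)
  have "W_fun M B T r \<mu> \<sigma> \<rho> m0 m1 \<kappa> \<delta> \<alpha> fI t z h
      = (\<integral>\<omega>. (LINT s:{t..T}|lborel. Dd s * exp (l * (B s \<omega> - B t \<omega>))) \<partial>M)"
    unfolding W_fun_def by (intro Bochner_Integration.integral_cong refl set_int_cong pw)
  also have "\<dots> = (LINT s:{t..T}|lborel. Dd s * exp (l\<^sup>2 * (s - t) / 2))"
    by (rule fubini_exp[OF P BM t Dc])
  also have "\<dots> = (LINT s:{t..T}|lborel. z powr p * k0 (s - t) h)"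
  proof (rule set_int_cong)
    fix s
    have "exp (\<beta>' * (s - t) - q * I (s - t) h) * exp (l\<^sup>2 * (s - t) / 2) = exp (\<beta> * (s - t) - q * I (s - t) h)"
      unfolding exp_add[symmetric] \<beta>'_def by (simp add: algebra_simps)
    then show "Dd s * exp (l\<^sup>2 * (s - t) / 2) = z powr p * k0 (s - t) h"
      unfolding Dd_def k0_def by (simp add: algebra_simps)
  qed
  also have "\<dots> = z powr p * (LINT s:{t..T}|lborel. k0 (s - t) h)"
    by (rule set_integral_mult_right)
  also have "\<dots> = z powr p * g (T - t) h"
    unfolding g_def using lint_shift[OF k0_cont h t(2)] by simp
  finally show ?thesis .
qed

lemma alg:
  fixes \<beta> \<rho> p r \<theta> q M m0 m1 hk z A G Gh c h \<delta> fI :: real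
  assumes "\<beta> = - \<rho> + p * (\<rho> - r) + \<theta>\<^sup>2 * p * (p - 1) / 2" "q = 1 - p" "M = m0 + m1 * hk"
  shows "- (- (z * (z * A) * ((fI - \<delta> * h) * Gh + (\<beta> - q * M) * G + c * h))
       + 1/2 * \<theta>\<^sup>2 * z\<^sup>2 * (G * (p * ((p - 1) * A)))
       + (\<rho> - r + m0 + m1 * hk) * z * (G * (p * (z * A)))
       + (- \<delta> * h + fI) * (z * (z * A) * Gh)
       - (\<rho> + m0 + m1 * hk) * (z * (z * A) * G)) = c * (z * (z * A)) * h"
  unfolding assms by (simp add: field_simps power2_eq_square)

lemma cont_TD:
  fixes F :: "real \<Rightarrow> real \<Rightarrow> real" and S :: "(real \<times> real \<times> real) set"
  assumes c: "continuous_on ({0..} \<times> {0<..}) (\<lambda>(s,h). F s h)" and S: "S \<subseteq> {x. fst x \<le> T \<and> snd (snd x) > 0}"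
  shows "continuous_on S (\<lambda>x. F (T - fst x) (snd (snd x)))"
proof -
  have "continuous_on S (\<lambda>x. (\<lambda>(s,h). F s h) (T - fst x, snd (snd x)))"
    by (rule continuous_on_compose2[OF c]) (use S in \<open>auto intro!: continuous_intros\<close>)
  then show ?thesis by simp
qed

theorem proposition3p1:
  fixes M :: "'a measure" and B :: "real \<Rightarrow> 'a \<Rightarrow> real"
    and T r \<mu> \<sigma> \<rho> m0 m1 \<kappa> \<delta> \<alpha> fI :: real
  assumes "prob_space M" and "std_brownian_motion M B"
    and "T > 0" and "r > 0" and "\<sigma> > 0" and "\<rho> > 0" and "m0 \<ge> 0" and "m1 \<ge> 0"
    and "\<kappa> > 0" and "\<delta> > 0" and "0 < \<alpha>" and "\<alpha> < 1" and "fI > 0"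
  defines "W \<equiv> W_fun M B T r \<mu> \<sigma> \<rho> m0 m1 \<kappa> \<delta> \<alpha> fI"
    and "\<theta> \<equiv> (\<mu> - r) / \<sigma>"
  shows "continuous_on ({0..T} \<times> {0<..} \<times> {0<..}) (\<lambda>(t, z, h). W t z h)
    \<and> (\<exists>Wt Wz Wzz Wh.
         continuous_on ({0..<T} \<times> {0<..} \<times> {0<..}) (\<lambda>(t, z, h). Wt t z h)
       \<and> continuous_on ({0..<T} \<times> {0<..} \<times> {0<..}) (\<lambda>(t, z, h). Wz t z h)
       \<and> continuous_on ({0..<T} \<times> {0<..} \<times> {0<..}) (\<lambda>(t, z, h). Wzz t z h)
       \<and> continuous_on ({0..<T} \<times> {0<..} \<times> {0<..}) (\<lambda>(t, z, h). Wh t z h)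
       \<and> (\<forall>t\<in>{0..<T}. \<forall>z>0. \<forall>h>0.
            ((\<lambda>s. W s z h) has_real_derivative Wt t z h) (at t within {0..<T})
          \<and> ((\<lambda>y. W t y h) has_real_derivative Wz t z h) (at z)
          \<and> ((\<lambda>y. Wz t y h) has_real_derivative Wzz t z h) (at z)
          \<and> ((\<lambda>k. W t z k) has_real_derivative Wh t z h) (at h)
          \<and> - (Wt t z h + 1/2 * \<theta>\<^sup>2 * z\<^sup>2 * Wzz t z h
                + (\<rho> - r + m0 + m1 * h powr (- \<kappa>)) * z * Wz t z h
                + (- \<delta> * h + fI) * Wh t z h
                - (\<rho> + m0 + m1 * h powr (- \<kappa>)) * W t z h)
            = u_hat \<alpha> z h))
    \<and> (\<forall>z>0. \<forall>h>0. W T z h = 0)"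
proof -
  define p where "p = \<alpha> / (\<alpha> - 1)"
  define q where "q = 1 - p"
  define \<beta> where "\<beta> = - \<rho> + p * (\<rho> - r) + \<theta>\<^sup>2 * p * (p - 1) / 2"
  define c where "c = (1 - \<alpha>) / \<alpha> powr p"
  interpret pde \<delta> fI \<kappa> m0 m1 \<beta> c q by unfold_locales (use assms in auto)
  have Wc: "W t z h = z powr p * g (T - t) h" if "t \<in> {0..T}" "z > 0" "h > 0" for t z h
    using W_closed[OF assms(1-13), of t z h] that
    unfolding W_def p_def q_def \<beta>_def c_def \<theta>_def by simp
  define Wt where "Wt t z h = - (z powr p * k0 (T - t) h)" for t z h
  define Wz where "Wz t z h = g (T - t) h * (p * z powr (p - 1))" for t z h
  define Wzz where "Wzz t z h = g (T - t) h * (p * ((p - 1) * z powr (p - 1 - 1)))" for t z h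
  define Wh where "Wh t z h = z powr p * gh (T - t) h" for t z h
  let ?S = "{0..<T} \<times> {0<..} \<times> {0<..} :: (real \<times> real \<times> real) set"
  have zc: "continuous_on ?S (\<lambda>x. fst (snd x) powr a)" for a
    by (intro continuous_intros) auto
  have C1: "continuous_on ({0..T} \<times> {0<..} \<times> {0<..}) (\<lambda>(t, z, h). W t z h)"
  proof (rule continuous_on_eq)
    show "continuous_on ({0..T} \<times> {0<..} \<times> {0<..}) (\<lambda>x. fst (snd x) powr p * g (T - fst x) (snd (snd x)))"
      by (intro continuous_on_mult cont_TD[OF g_cont]) (auto intro!: continuous_intros)
    show "fst (snd x) powr p * g (T - fst x) (snd (snd x)) = (\<lambda>(t, z, h). W t z h) x"
      if "x \<in> {0..T} \<times> {0<..} \<times> {0<..}" for x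
      using that Wc by (auto simp: case_prod_beta)
  qed
  have C2: "continuous_on ?S (\<lambda>(t, z, h). Wt t z h)"
    unfolding Wt_def case_prod_beta
    by (intro continuous_on_minus continuous_on_mult zc cont_TD[OF k0_cont]) auto
  have C3: "continuous_on ?S (\<lambda>(t, z, h). Wz t z h)"
    unfolding Wz_def case_prod_beta
    by (intro continuous_on_mult continuous_on_const zc cont_TD[OF g_cont]) auto
  have C4: "continuous_on ?S (\<lambda>(t, z, h). Wzz t z h)"
    unfolding Wzz_def case_prod_beta
    by (intro continuous_on_mult continuous_on_const zc cont_TD[OF g_cont]) auto
  have C5: "continuous_on ?S (\<lambda>(t, z, h). Wh t z h)"
    unfolding Wh_def case_prod_beta
    by (intro continuous_on_mult zc cont_TD[OF gh_cont]) auto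
  have PT: "\<forall>t\<in>{0..<T}. \<forall>z>0. \<forall>h>0.
            ((\<lambda>s. W s z h) has_real_derivative Wt t z h) (at t within {0..<T})
          \<and> ((\<lambda>y. W t y h) has_real_derivative Wz t z h) (at z)
          \<and> ((\<lambda>y. Wz t y h) has_real_derivative Wzz t z h) (at z)
          \<and> ((\<lambda>k. W t z k) has_real_derivative Wh t z h) (at h)
          \<and> - (Wt t z h + 1/2 * \<theta>\<^sup>2 * z\<^sup>2 * Wzz t z h
                + (\<rho> - r + m0 + m1 * h powr (- \<kappa>)) * z * Wz t z h
                + (- \<delta> * h + fI) * Wh t z h
                - (\<rho> + m0 + m1 * h powr (- \<kappa>)) * W t z h)
            = u_hat \<alpha> z h"
  proof (intro ballI allI impI conjI)
    fix t z h :: real assume t: "t \<in> {0..<T}" and z: "z > 0" and h: "h > 0"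
    show "((\<lambda>s. W s z h) has_real_derivative Wt t z h) (at t within {0..<T})"
    proof -
      have d1: "((\<lambda>u. g u h) has_real_derivative k0 (T - t) h) (at (T - t) within {0..T})"
        by (rule g_deriv_s) (use t h in auto)
      have d1': "((\<lambda>u. g u h) has_real_derivative k0 (T - t) h) (at ((\<lambda>s. T - s) t) within ((\<lambda>s. T - s) ` {0..<T}))"
        by (rule has_field_derivative_subset[OF d1]) auto
      have d2: "((\<lambda>s. T - s) has_real_derivative (0 - 1)) (at t within {0..<T})"
        by (intro DERIV_diff DERIV_const DERIV_ident)
      have "(((\<lambda>u. g u h) \<circ> (\<lambda>s. T - s)) has_real_derivative k0 (T - t) h * (0 - 1)) (at t within {0..<T})"
        by (rule DERIV_image_chain[OF d1' d2])
      then have "((\<lambda>s. z powr p * g (T - s) h) has_real_derivative z powr p * (k0 (T - t) h * (0 - 1))) (at t within {0..<T})"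
        unfolding o_def by (rule DERIV_cmult)
      then have "((\<lambda>s. z powr p * g (T - s) h) has_real_derivative Wt t z h) (at t within {0..<T})"
        unfolding Wt_def by simp
      then show ?thesis
        by (rule has_field_derivative_transform_within[where d=1]) (use t z h Wc in auto)
    qed
    show "((\<lambda>y. W t y h) has_real_derivative Wz t z h) (at z)"
    proof -
      have "((\<lambda>y. g (T - t) h * y powr p) has_real_derivative g (T - t) h * (p * z powr (p - 1))) (at z)"
        by (rule DERIV_cmult[OF has_real_derivative_powr[OF z]])
      then show ?thesis unfolding Wz_def
        by (rule has_field_derivative_transform_within_open[where S="{0<..}"]) (use t z h Wc in auto)
    qed
    show "((\<lambda>y. Wz t y h) has_real_derivative Wzz t z h) (at z)"
      unfolding Wz_def Wzz_def
      by (rule DERIV_cmult[OF DERIV_cmult[OF has_real_derivative_powr[OF z]]])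
    show "((\<lambda>k. W t z k) has_real_derivative Wh t z h) (at h)"
    proof -
      have "((\<lambda>k. z powr p * g (T - t) k) has_real_derivative z powr p * gh (T - t) h) (at h)"
        by (rule DERIV_cmult[OF g_deriv_h]) (use t h in auto)
      then show ?thesis unfolding Wh_def
        by (rule has_field_derivative_transform_within_open[where S="{0<..}"]) (use t z h Wc in auto)
    qed
    define A where "A = z powr (p - 1 - 1)"
    have e1: "z powr (p - 1) = z * A"
    proof -
      have "z powr (p - 1) = z powr ((p - 1 - 1) + 1)" by simp
      also have "\<dots> = z powr (p - 1 - 1) * z powr 1" by (rule powr_add)
      finally show ?thesis using z unfolding A_def by simp
    qed
    have e2: "z powr p = z * (z * A)"
    proof -
      have "z powr p = z powr ((p - 1) + 1)" by simp
      also have "\<dots> = z powr (p - 1) * z powr 1" by (rule powr_add)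
      finally show ?thesis using z e1 by simp
    qed
    have U: "u_hat \<alpha> z h = c * (z * (z * A)) * h"
      unfolding u_hat_def c_def p_def[symmetric] using z by (simp add: powr_divide e2)
    have P: "k0 (T - t) h = (fI - \<delta> * h) * gh (T - t) h + (\<beta> - q * mm h) * g (T - t) h + c * h"
      by (rule pde_ident) (use t h in auto)
    have Wtz: "W t z h = z * (z * A) * g (T - t) h" using Wc[of t z h] t z h e2 by simp
    show "- (Wt t z h + 1/2 * \<theta>\<^sup>2 * z\<^sup>2 * Wzz t z h
                + (\<rho> - r + m0 + m1 * h powr (- \<kappa>)) * z * Wz t z h
                + (- \<delta> * h + fI) * Wh t z h
                - (\<rho> + m0 + m1 * h powr (- \<kappa>)) * W t z h)
            = u_hat \<alpha> z h"
      unfolding U Wtz Wt_def Wz_def Wzz_def Wh_def e1 e2 P A_def[symmetric]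
      by (rule alg) (simp_all add: \<beta>_def q_def mm_def)
  qed
  have PTT: "\<forall>z>0. \<forall>h>0. W T z h = 0"
    using Wc assms(3) by (simp add: g_def)
  show ?thesis using C1 C2 C3 C4 C5 PT PTT by blast
qed

end
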